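(* Let $H=(V,F)$ with $V=\{1,\dots,n\}$ be a graph with at least one edge, $k$ an integer, and $\chi:V_0\to\{1,\dots,k\}$ a proper coloring of $H[V_0]$ for some $V_0\subseteq V$. Let $G$ be the graph obtained as follows: start with $G=H$; add vertices $a,a',b,b'$ and edges $\{a,a'\},\{b,b'\},\{a,b\}$; for each $j\in V_0$ with $\chi(j)\in\{2,\dots,k-1\}$ add vertices $j(1),j(2)$ and edges $\{j,j(1)\},\{j,j(2)\},\{j(1),j(2)\},\{a,j\},\{b,j\},\{a,j(2)\},\{b,j(1)\}$; for each $j\in V_0$ with $\chi(j)=1$ add a vertex $j(2)$ and edges $\{j,j(2)\},\{b,j\},\{a,j(2)\}$; for each $j\in V_0$ with $\chi(j)=k$ add a vertex $j(1)$ and edges $\{j,j(1)\},\{a,j\},\{b,j(1)\}$. Then $tw(G)\le tw(H)+2$ and $pw(G)\le pw(H)+4$.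
   Context: $tw$ and $pw$ denote treewidth and pathwidth. *)

theory Defs
  imports Main
begin

definition simple_graph :: "'a set \<Rightarrow> 'a set set \<Rightarrow> bool" where
  "simple_graph V E \<longleftrightarrow> finite V \<and> (\<forall>e\<in>E. \<exists>x y. e = {x, y} \<and> x \<noteq> y \<and> x \<in> V \<and> y \<in> V)"

definition connected_on :: "'a set \<Rightarrow> 'a set set \<Rightarrow> bool" where
  "connected_on S E \<longleftrightarrow>
     (\<forall>u\<in>S. \<forall>v\<in>S. (\<lambda>x y. {x, y} \<in> E \<and> x \<in> S \<and> y \<in> S)\<^sup>*\<^sup>* u v)"

definition is_tree :: "nat set \<Rightarrow> nat set set \<Rightarrow> bool" where
  "is_tree I T \<longleftrightarrow> finite I \<and> I \<noteq> {} \<and> simple_graph I T \<and> connected_on I T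
                    \<and> card T = card I - 1"

definition tree_decomposition ::
  "'a set \<Rightarrow> 'a set set \<Rightarrow> nat set \<Rightarrow> nat set set \<Rightarrow> (nat \<Rightarrow> 'a set) \<Rightarrow> bool" where
  "tree_decomposition V E I T bag \<longleftrightarrow>
     is_tree I T \<and>
     (\<forall>i\<in>I. bag i \<subseteq> V) \<and>
     (\<forall>v\<in>V. \<exists>i\<in>I. v \<in> bag i) \<and>
     (\<forall>e\<in>E. \<exists>i\<in>I. e \<subseteq> bag i) \<and>
     (\<forall>v\<in>V. connected_on {i\<in>I. v \<in> bag i} T)"

definition path_decomposition ::
  "'a set \<Rightarrow> 'a set set \<Rightarrow> nat \<Rightarrow> (nat \<Rightarrow> 'a set) \<Rightarrow> bool" where
  "path_decomposition V E m bag \<longleftrightarrow>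
     m \<ge> 1 \<and>
     (\<forall>i<m. bag i \<subseteq> V) \<and>
     (\<forall>v\<in>V. \<exists>i<m. v \<in> bag i) \<and>
     (\<forall>e\<in>E. \<exists>i<m. e \<subseteq> bag i) \<and>
     (\<forall>v i j l. i \<le> j \<longrightarrow> j \<le> l \<longrightarrow> l < m \<longrightarrow> v \<in> bag i \<longrightarrow> v \<in> bag l \<longrightarrow> v \<in> bag j)"

definition decomp_width :: "nat set \<Rightarrow> (nat \<Rightarrow> 'a set) \<Rightarrow> nat" where
  "decomp_width I bag = Max ((\<lambda>i. card (bag i)) ` I) - 1"

definition treewidth :: "'a set \<Rightarrow> 'a set set \<Rightarrow> nat" where
  "treewidth V E = (LEAST w. \<exists>I T bag. tree_decomposition V E I T bag \<and> decomp_width I bag = w)"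

definition pathwidth :: "'a set \<Rightarrow> 'a set set \<Rightarrow> nat" where
  "pathwidth V E = (LEAST w. \<exists>m bag. path_decomposition V E m bag \<and> decomp_width {0..<m} bag = w)"

datatype gvert = Old nat | VA | VA' | VB | VB' | J1 nat | J2 nat

definition G_vertices :: "nat set \<Rightarrow> nat set \<Rightarrow> (nat \<Rightarrow> nat) \<Rightarrow> nat \<Rightarrow> gvert set" where
  "G_vertices V V0 \<chi> k =
     Old ` V \<union> {VA, VA', VB, VB'}
     \<union> {J1 j | j. j \<in> V0 \<and> \<chi> j \<in> {2..k-1}} \<union> {J2 j | j. j \<in> V0 \<and> \<chi> j \<in> {2..k-1}}
     \<union> {J2 j | j. j \<in> V0 \<and> \<chi> j = 1}
     \<union> {J1 j | j. j \<in> V0 \<and> \<chi> j = k}"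

definition G_edges :: "nat set set \<Rightarrow> nat set \<Rightarrow> (nat \<Rightarrow> nat) \<Rightarrow> nat \<Rightarrow> gvert set set" where
  "G_edges F V0 \<chi> k =
     (\<lambda>e. Old ` e) ` F \<union> {{VA, VA'}, {VB, VB'}, {VA, VB}}
     \<union> (\<Union>j\<in>{j\<in>V0. \<chi> j \<in> {2..k-1}}.
          {{Old j, J1 j}, {Old j, J2 j}, {J1 j, J2 j}, {VA, Old j}, {VB, Old j}, {VA, J2 j}, {VB, J1 j}})
     \<union> (\<Union>j\<in>{j\<in>V0. \<chi> j = 1}. {{Old j, J2 j}, {VB, Old j}, {VA, J2 j}})
     \<union> (\<Union>j\<in>{j\<in>V0. \<chi> j = k}. {{Old j, J1 j}, {VA, Old j}, {VB, J1 j}})"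

end

theory Submission
  imports Defs
begin


lemma connected_on_mono: "connected_on S E \<Longrightarrow> E \<subseteq> E' \<Longrightarrow> connected_on S E'"
  unfolding connected_on_def
proof (intro ballI)
  fix u v assume c: "\<forall>u\<in>S. \<forall>v\<in>S. (\<lambda>x y. {x, y} \<in> E \<and> x \<in> S \<and> y \<in> S)\<^sup>*\<^sup>* u v"
    and s: "E \<subseteq> E'" and u: "u \<in> S" and v: "v \<in> S"
  from c u v have "(\<lambda>x y. {x, y} \<in> E \<and> x \<in> S \<and> y \<in> S)\<^sup>*\<^sup>* u v" by blast
  then show "(\<lambda>x y. {x, y} \<in> E' \<and> x \<in> S \<and> y \<in> S)\<^sup>*\<^sup>* u v"
    by (rule rtranclp_mono[THEN predicate2D, rotated]) (use s in auto)
qed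

lemma connected_on_single: "connected_on {x} E"
  unfolding connected_on_def by simp

lemma connected_on_insert:
  assumes c: "connected_on S E" and p: "p \<in> S" and e: "{p,x} \<in> E"
  shows "connected_on (insert x S) E"
proof -
  let ?R = "\<lambda>a b. {a,b} \<in> E \<and> a \<in> S \<and> b \<in> S"
  let ?R' = "\<lambda>a b. {a,b} \<in> E \<and> a \<in> insert x S \<and> b \<in> insert x S"
  have lift: "?R'\<^sup>*\<^sup>* u v" if "u \<in> S" "v \<in> S" for u v
  proof -
    have "?R\<^sup>*\<^sup>* u v" using c that by (simp add: connected_on_def)
    then show ?thesis by (rule rtranclp_mono[THEN predicate2D, rotated]) auto
  qed
  have px: "?R' p x" using e p by auto
  have xp: "?R' x p" using e p by (auto simp: insert_commute)
  show ?thesis unfolding connected_on_def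
  proof (intro ballI)
    fix u v assume u: "u \<in> insert x S" and v: "v \<in> insert x S"
    show "?R'\<^sup>*\<^sup>* u v"
    proof (cases "u = x")
      case True
      show ?thesis
      proof (cases "v = x")
        case True with \<open>u = x\<close> show ?thesis by simp
      next
        case False
        with v have "v \<in> S" by simp
        then have "?R'\<^sup>*\<^sup>* p v" using lift p by blast
        then have "?R'\<^sup>*\<^sup>* x v" by (rule converse_rtranclp_into_rtranclp[where r="?R'", OF xp])
        then show ?thesis using True by simp
      qed
    next
      case False
      with u have uS: "u \<in> S" by simp
      show ?thesis
      proof (cases "v = x")
        case True
        have "?R'\<^sup>*\<^sup>* u p" using lift p uS by blast
        then have "?R'\<^sup>*\<^sup>* u x" by (rule rtranclp.rtrancl_into_rtrancl[where r="?R'", OF _ px])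
        then show ?thesis using True by simp
      next
        case False with v uS lift show ?thesis by simp
      qed
    qed
  qed
qed

lemma is_tree_leaf:
  assumes t: "is_tree I T" and x: "x \<notin> I" and p: "p \<in> I"
  shows "is_tree (insert x I) (insert {p,x} T)"
proof -
  have fI: "finite I" and sg: "simple_graph I T" and con: "connected_on I T" and cT: "card T = card I - 1"
    using t by (auto simp: is_tree_def)
  have Tsub: "T \<subseteq> Pow I" using sg by (auto simp: simple_graph_def)
  have fT: "finite T" using Tsub fI by (meson finite_Pow_iff finite_subset)
  have nT: "{p,x} \<notin> T" using Tsub x by auto
  have sg': "simple_graph (insert x I) (insert {p,x} T)"
    using sg p x fI unfolding simple_graph_def by blast
  have con': "connected_on (insert x I) (insert {p,x} T)"
    by (rule connected_on_insert[OF connected_on_mono[OF con] p]) auto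
  have cpos: "card I > 0" using fI p card_gt_0_iff by blast
  have "card (insert {p,x} T) = card (insert x I) - 1"
    using cT fT nT fI x cpos by simp
  then show ?thesis using sg' con' fI by (simp add: is_tree_def)
qed

lemma td_leaf:
  assumes td: "tree_decomposition V E I T bag" and x: "x \<notin> I" and p: "p \<in> I"
    and B: "B \<inter> V \<subseteq> bag p" and E': "\<forall>e\<in>E'. e \<subseteq> B"
  shows "tree_decomposition (V \<union> B) (E \<union> E') (insert x I) (insert {p,x} T) (bag(x:=B))"
proof -
  have t: "is_tree I T" and bs: "\<forall>i\<in>I. bag i \<subseteq> V" and cv: "\<forall>v\<in>V. \<exists>i\<in>I. v \<in> bag i"
    and ce: "\<forall>e\<in>E. \<exists>i\<in>I. e \<subseteq> bag i" and cc: "\<forall>v\<in>V. connected_on {i\<in>I. v \<in> bag i} T"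
    using td by (auto simp: tree_decomposition_def)
  have t': "is_tree (insert x I) (insert {p,x} T)" by (rule is_tree_leaf[OF t x p])
  have bs': "\<forall>i\<in>insert x I. (bag(x:=B)) i \<subseteq> V \<union> B" using bs x by auto
  have cv': "\<forall>v\<in>V \<union> B. \<exists>i\<in>insert x I. v \<in> (bag(x:=B)) i"
  proof
    fix v assume "v \<in> V \<union> B"
    then show "\<exists>i\<in>insert x I. v \<in> (bag(x:=B)) i"
    proof
      assume "v \<in> V" then obtain i where "i \<in> I" "v \<in> bag i" using cv by blast
      then show ?thesis using x by (intro bexI[of _ i]) auto
    next
      assume "v \<in> B" then show ?thesis by (intro bexI[of _ x]) auto
    qed
  qed
  have ce': "\<forall>e\<in>E \<union> E'. \<exists>i\<in>insert x I. e \<subseteq> (bag(x:=B)) i"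
  proof
    fix e assume "e \<in> E \<union> E'"
    then show "\<exists>i\<in>insert x I. e \<subseteq> (bag(x:=B)) i"
    proof
      assume "e \<in> E" then obtain i where "i \<in> I" "e \<subseteq> bag i" using ce by blast
      then show ?thesis using x by (intro bexI[of _ i]) auto
    next
      assume "e \<in> E'" then show ?thesis using E' by (intro bexI[of _ x]) auto
    qed
  qed
  have cc': "\<forall>v\<in>V \<union> B. connected_on {i\<in>insert x I. v \<in> (bag(x:=B)) i} (insert {p,x} T)"
  proof
    fix v assume v: "v \<in> V \<union> B"
    define S where "S = {i\<in>I. v \<in> bag i}"
    have S': "{i\<in>insert x I. v \<in> (bag(x:=B)) i} = (if v \<in> B then insert x S else S)"
      using x by (auto simp: S_def)
    show "connected_on {i\<in>insert x I. v \<in> (bag(x:=B)) i} (insert {p,x} T)"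
    proof (cases "v \<in> V")
      case True
      have c1: "connected_on S (insert {p,x} T)"
        using cc True connected_on_mono unfolding S_def by (metis subset_insertI)
      show ?thesis
      proof (cases "v \<in> B")
        case True
        with \<open>v \<in> V\<close> B p have "p \<in> S" by (auto simp: S_def)
        then show ?thesis unfolding S' using True by (simp add: connected_on_insert[OF c1])
      next
        case False then show ?thesis unfolding S' using c1 by simp
      qed
    next
      case False
      with v have vB: "v \<in> B" by simp
      have "S = {}" using bs False by (auto simp: S_def)
      then show ?thesis unfolding S' using vB by (simp add: connected_on_single)
    qed
  qed
  show ?thesis unfolding tree_decomposition_def using t' bs' cv' ce' cc' by blast
qed

lemma td_map:
  assumes td: "tree_decomposition V E I T bag"
  shows "tree_decomposition (Old ` V \<union> {VA,VB}) ((\<lambda>e. Old ` e) ` E \<union> {{VA,VB}}) I T (\<lambda>i. Old ` bag i \<union> {VA,VB})"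
proof -
  have t: "is_tree I T" and bs: "\<forall>i\<in>I. bag i \<subseteq> V" and cv: "\<forall>v\<in>V. \<exists>i\<in>I. v \<in> bag i"
    and ce: "\<forall>e\<in>E. \<exists>i\<in>I. e \<subseteq> bag i" and cc: "\<forall>v\<in>V. connected_on {i\<in>I. v \<in> bag i} T"
    using td by (auto simp: tree_decomposition_def)
  have Ine: "I \<noteq> {}" and cI: "connected_on I T" using t by (auto simp: is_tree_def)
  then obtain i0 where i0: "i0 \<in> I" by blast
  have bs': "\<forall>i\<in>I. Old ` bag i \<union> {VA,VB} \<subseteq> Old ` V \<union> {VA,VB}" using bs by auto
  have cv': "\<forall>v\<in>Old ` V \<union> {VA,VB}. \<exists>i\<in>I. v \<in> Old ` bag i \<union> {VA,VB}"
    using cv i0 by blast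
  have ce': "\<forall>e\<in>(\<lambda>e. Old ` e) ` E \<union> {{VA,VB}}. \<exists>i\<in>I. e \<subseteq> Old ` bag i \<union> {VA,VB}"
  proof
    fix e assume "e \<in> (\<lambda>e. Old ` e) ` E \<union> {{VA,VB}}"
    then show "\<exists>i\<in>I. e \<subseteq> Old ` bag i \<union> {VA,VB}"
    proof
      assume "e \<in> (\<lambda>e. Old ` e) ` E"
      then obtain e0 where "e0 \<in> E" "e = Old ` e0" by blast
      then obtain i where "i \<in> I" "e0 \<subseteq> bag i" using ce by blast
      then show ?thesis using \<open>e = Old ` e0\<close> by blast
    next
      assume "e \<in> {{VA,VB}}" then show ?thesis using i0 by blast
    qed
  qed
  have cc': "\<forall>v\<in>Old ` V \<union> {VA,VB}. connected_on {i\<in>I. v \<in> Old ` bag i \<union> {VA,VB}} T"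
  proof
    fix v assume "v \<in> Old ` V \<union> {VA,VB}"
    then consider u where "u \<in> V" "v = Old u" | "v = VA" | "v = VB" by blast
    then show "connected_on {i\<in>I. v \<in> Old ` bag i \<union> {VA,VB}} T"
    proof cases
      case 1
      have "{i\<in>I. v \<in> Old ` bag i \<union> {VA,VB}} = {i\<in>I. u \<in> bag i}" using 1 by auto
      then show ?thesis using cc 1 by simp
    next
      case 2 then show ?thesis using cI by simp
    next
      case 3 then show ?thesis using cI by simp
    qed
  qed
  show ?thesis unfolding tree_decomposition_def using t bs' cv' ce' cc' by blast
qed




lemma pd_dup:
  assumes pd: "path_decomposition V E m bag" and q: "q < m" and N: "N \<inter> V = {}"
    and E': "\<forall>e\<in>E'. e \<subseteq> bag q \<union> N"
  shows "path_decomposition (V \<union> N) (E \<union> E') (Suc m)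
     (\<lambda>i. if i \<le> q then bag i else if i = Suc q then bag q \<union> N else bag (i - 1))"
    (is "path_decomposition _ _ _ ?b")
proof -
  have m: "m \<ge> 1" and bs: "\<forall>i<m. bag i \<subseteq> V" and cv: "\<forall>v\<in>V. \<exists>i<m. v \<in> bag i"
    and ce: "\<forall>e\<in>E. \<exists>i<m. e \<subseteq> bag i"
    and ip: "\<forall>v i j l. i \<le> j \<longrightarrow> j \<le> l \<longrightarrow> l < m \<longrightarrow> v \<in> bag i \<longrightarrow> v \<in> bag l \<longrightarrow> v \<in> bag j"
    using pd by (auto simp: path_decomposition_def)
  define f where "f i = (if i \<le> q then i else i - 1)" for i
  have fmono: "f i \<le> f j" if "i \<le> j" for i j using that by (auto simp: f_def)
  have flt: "f i < m" if "i < Suc m" for i using that q by (auto simp: f_def)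
  have bf: "?b i = bag (f i) \<union> (if i = Suc q then N else {})" for i by (auto simp: f_def)
  have pos: "?b (if i \<le> q then i else Suc i) = bag i" for i by auto
  have bs': "\<forall>i<Suc m. ?b i \<subseteq> V \<union> N"
    using bs flt unfolding bf by (metis Un_mono empty_subsetI order_refl)
  have cv': "\<forall>v\<in>V \<union> N. \<exists>i<Suc m. v \<in> ?b i"
  proof
    fix v assume "v \<in> V \<union> N"
    then show "\<exists>i<Suc m. v \<in> ?b i"
    proof
      assume "v \<in> V" then obtain i where "i < m" "v \<in> bag i" using cv by blast
      then show ?thesis by (intro exI[of _ "if i \<le> q then i else Suc i"]) (auto simp del: Suc_le_mono)
    next
      assume "v \<in> N" then show ?thesis using q by (intro exI[of _ "Suc q"]) auto
    qed
  qed
  have ce': "\<forall>e\<in>E \<union> E'. \<exists>i<Suc m. e \<subseteq> ?b i"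
  proof
    fix e assume "e \<in> E \<union> E'"
    then show "\<exists>i<Suc m. e \<subseteq> ?b i"
    proof
      assume "e \<in> E" then obtain i where "i < m" "e \<subseteq> bag i" using ce by blast
      then show ?thesis by (intro exI[of _ "if i \<le> q then i else Suc i"]) (auto simp del: Suc_le_mono)
    next
      assume "e \<in> E'" then show ?thesis using q E' by (intro exI[of _ "Suc q"]) auto
    qed
  qed
  have ip': "\<forall>v i j l. i \<le> j \<longrightarrow> j \<le> l \<longrightarrow> l < Suc m \<longrightarrow> v \<in> ?b i \<longrightarrow> v \<in> ?b l \<longrightarrow> v \<in> ?b j"
  proof (intro allI impI)
    fix v i j l assume ij: "i \<le> j" and jl: "j \<le> l" and l: "l < Suc m" and vi: "v \<in> ?b i" and vl: "v \<in> ?b l"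
    show "v \<in> ?b j"
    proof (cases "v \<in> N")
      case False
      then have "v \<in> bag (f i)" "v \<in> bag (f l)" using vi vl unfolding bf by (auto split: if_splits)
      then have "v \<in> bag (f j)" using ip fmono[OF ij] fmono[OF jl] flt[OF l] by blast
      then show ?thesis unfolding bf by simp
    next
      case True
      then have nv: "v \<notin> bag a" if "a < m" for a using bs N that by blast
      have "i = Suc q" using vi nv[OF flt[of i]] l ij jl unfolding bf by (auto split: if_splits)
      moreover have "l = Suc q" using vl nv[OF flt[of l]] l unfolding bf by (auto split: if_splits)
      ultimately have "j = i" using ij jl by simp
      then show ?thesis using vi by (simp only:)
    qed
  qed
  show ?thesis unfolding path_decomposition_def using m bs' cv' ce' ip' by simp
qed

lemma pd_dup_inv:
  assumes pd: "path_decomposition V E m bag" and q: "q < m" and N: "N \<inter> V = {}"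
    and E': "\<forall>e\<in>E'. e \<subseteq> bag q \<union> N"
    and cb: "\<forall>i<m. card (bag i) \<le> C + 2" and cq: "card (bag q) \<le> C" and cN: "card N \<le> 2"
    and inv: "\<forall>v\<in>X. \<exists>i<m. Q v (bag i) \<and> card (bag i) \<le> C"
  shows "\<exists>bag'. path_decomposition (V \<union> N) (E \<union> E') (Suc m) bag' \<and> (\<forall>i<Suc m. card (bag' i) \<le> C + 2)
     \<and> (\<forall>v\<in>X. \<exists>i<Suc m. Q v (bag' i) \<and> card (bag' i) \<le> C)"
proof -
  let ?b = "\<lambda>i. if i \<le> q then bag i else if i = Suc q then bag q \<union> N else bag (i - 1)"
  have 1: "path_decomposition (V \<union> N) (E \<union> E') (Suc m) ?b" by (rule pd_dup[OF pd q N E'])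
  have cqN: "card (bag q \<union> N) \<le> C + 2" using card_Un_le[of "bag q" N] cq cN by linarith
  have 2: "\<forall>i<Suc m. card (?b i) \<le> C + 2"
  proof (intro allI impI)
    fix i assume "i < Suc m"
    then show "card (?b i) \<le> C + 2" using cb cqN q by (cases "i \<le> q"; cases "i = Suc q") auto
  qed
  have 3: "\<forall>v\<in>X. \<exists>i<Suc m. Q v (?b i) \<and> card (?b i) \<le> C"
  proof
    fix v assume "v \<in> X"
    then obtain i where "i < m" "Q v (bag i)" "card (bag i) \<le> C" using inv by blast
    then show "\<exists>i<Suc m. Q v (?b i) \<and> card (?b i) \<le> C"
      by (intro exI[of _ "if i \<le> q then i else Suc i"]) (auto simp del: Suc_le_mono)
  qed
  show ?thesis using 1 2 3 by blast
qed

lemma td_leaf_inv: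
  assumes td: "tree_decomposition V E I T bag" and fI: "finite I" and p: "p \<in> I"
    and B: "B \<inter> V \<subseteq> bag p" and E': "\<forall>e\<in>E'. e \<subseteq> B" and cB: "card B \<le> C"
    and cb: "\<forall>i\<in>I. card (bag i) \<le> C" and inv: "\<forall>v\<in>X. \<exists>i\<in>I. Q v (bag i)"
  shows "\<exists>I' T' bag'. tree_decomposition (V \<union> B) (E \<union> E') I' T' bag' \<and> finite I'
     \<and> (\<forall>i\<in>I'. card (bag' i) \<le> C) \<and> (\<forall>v\<in>X. \<exists>i\<in>I'. Q v (bag' i)) \<and> (\<exists>x\<in>I'. bag' x = B)"
proof -
  obtain x :: nat where x: "x \<notin> I" using fI by (meson ex_new_if_finite infinite_UNIV_nat)
  have 1: "tree_decomposition (V \<union> B) (E \<union> E') (insert x I) (insert {p,x} T) (bag(x:=B))"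
    by (rule td_leaf[OF td x p B E'])
  have 2: "\<forall>i\<in>insert x I. card ((bag(x:=B)) i) \<le> C" using cb cB by auto
  have 3: "\<forall>v\<in>X. \<exists>i\<in>insert x I. Q v ((bag(x:=B)) i)"
  proof
    fix v assume "v \<in> X"
    then obtain i where "i \<in> I" "Q v (bag i)" using inv by blast
    then show "\<exists>i\<in>insert x I. Q v ((bag(x:=B)) i)" using x by (intro bexI[of _ i]) auto
  qed
  show ?thesis using 1 2 3 fI by (intro exI[of _ "insert x I"] exI[of _ "insert {p,x} T"] exI[of _ "bag(x:=B)"]) auto
qed




lemma gv_mono: "G_vertices V S \<chi> k \<subseteq> G_vertices V (insert j S) \<chi> k"
  unfolding G_vertices_def by blast

lemma gv_new: "j \<notin> S \<Longrightarrow> J1 j \<notin> G_vertices V S \<chi> k \<and> J2 j \<notin> G_vertices V S \<chi> k"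
  unfolding G_vertices_def by blast

lemma gv_basic: "VA \<in> G_vertices V S \<chi> k" "VB \<in> G_vertices V S \<chi> k" "j \<in> V \<Longrightarrow> Old j \<in> G_vertices V S \<chi> k"
  unfolding G_vertices_def by blast+

lemma gv_ins: "G_vertices V (insert j S) \<chi> k \<subseteq> G_vertices V S \<chi> k \<union> {J1 j, J2 j}"
  unfolding G_vertices_def by blast

definition gad :: "(nat \<Rightarrow> nat) \<Rightarrow> nat \<Rightarrow> nat \<Rightarrow> gvert set set" where
  "gad \<chi> k j = (if \<chi> j \<in> {2..k-1} then {{Old j, J1 j}, {Old j, J2 j}, {J1 j, J2 j}, {VA, Old j}, {VB, Old j}, {VA, J2 j}, {VB, J1 j}} else {})
    \<union> (if \<chi> j = 1 then {{Old j, J2 j}, {VB, Old j}, {VA, J2 j}} else {})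
    \<union> (if \<chi> j = k then {{Old j, J1 j}, {VA, Old j}, {VB, J1 j}} else {})"

lemma UN_filter_insert:
  "(\<Union>x\<in>{x\<in>insert j S. P x}. f x) = (if P j then f j else {}) \<union> (\<Union>x\<in>{x\<in>S. P x}. f x)"
  by auto

lemma un_rearr: "A \<union> B \<union> (X1 \<union> U1) \<union> (X2 \<union> U2) \<union> (X3 \<union> U3) = (A \<union> B \<union> U1 \<union> U2 \<union> U3) \<union> (X1 \<union> X2 \<union> X3)"
  by blast

lemma ge_insert: "G_edges F (insert j S) \<chi> k = G_edges F S \<chi> k \<union> gad \<chi> k j"
  unfolding G_edges_def gad_def by (simp only: UN_filter_insert un_rearr)

lemma ge_mono: "G_edges F S \<chi> k \<subseteq> G_edges F (insert j S) \<chi> k"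
  unfolding ge_insert by (rule Un_upper1)

lemma in_if_empty: "(e \<in> (if P then X else {})) \<longleftrightarrow> P \<and> e \<in> X" by simp

lemma ge_split:
  assumes "e \<in> G_edges F (insert j S) \<chi> k" "e \<notin> G_edges F S \<chi> k"
  shows "(\<chi> j \<in> {2..k-1} \<and> e \<in> {{Old j, J1 j}, {Old j, J2 j}, {J1 j, J2 j}, {VA, Old j}, {VB, Old j}, {VA, J2 j}, {VB, J1 j}})
    \<or> (\<chi> j = 1 \<and> e \<in> {{Old j, J2 j}, {VB, Old j}, {VA, J2 j}})
    \<or> (\<chi> j = k \<and> e \<in> {{Old j, J1 j}, {VA, Old j}, {VB, J1 j}})"
proof -
  have "e \<in> gad \<chi> k j" using assms unfolding ge_insert by blast
  then show ?thesis unfolding gad_def Un_iff in_if_empty by (elim disjE) (simp_all only: simp_thms)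
qed

lemma ge_key:
  assumes "j \<in> V" "e \<in> G_edges F (insert j S) \<chi> k" "e \<notin> G_edges F S \<chi> k"
  shows "e \<subseteq> G_vertices V (insert j S) \<chi> k \<and> (e \<subseteq> {VA,VB,Old j,J2 j} \<or> e \<subseteq> {VB,Old j,J1 j,J2 j})"
proof -
  have o: "Old j \<in> G_vertices V (insert j S) \<chi> k" "VA \<in> G_vertices V (insert j S) \<chi> k"
    "VB \<in> G_vertices V (insert j S) \<chi> k" using gv_basic assms(1) by auto
  have j1: "J1 j \<in> G_vertices V (insert j S) \<chi> k" if "\<chi> j \<in> {2..k-1} \<or> \<chi> j = k"
    using that unfolding G_vertices_def by blast
  have j2: "J2 j \<in> G_vertices V (insert j S) \<chi> k" if "\<chi> j \<in> {2..k-1} \<or> \<chi> j = 1"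
    using that unfolding G_vertices_def by blast
  from ge_split[OF assms(2,3)] show ?thesis
  proof (elim disjE conjE)
    assume "\<chi> j \<in> {2..k-1}" "e \<in> {{Old j, J1 j}, {Old j, J2 j}, {J1 j, J2 j}, {VA, Old j}, {VB, Old j}, {VA, J2 j}, {VB, J1 j}}"
    then show ?thesis using o j1 j2 by auto
  next
    assume "\<chi> j = 1" "e \<in> {{Old j, J2 j}, {VB, Old j}, {VA, J2 j}}"
    then show ?thesis using o j1 j2 by auto
  next
    assume "\<chi> j = k" "e \<in> {{Old j, J1 j}, {VA, Old j}, {VB, J1 j}}"
    then show ?thesis using o j1 j2 by auto
  qed
qed

lemma gv_empty: "G_vertices V {} \<chi> k = Old ` V \<union> {VA,VB} \<union> {VA,VB,VA',VB'}"
  unfolding G_vertices_def by auto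

lemma ge_empty: "G_edges F {} \<chi> k = (\<lambda>e. Old ` e) ` F \<union> {{VA,VB}} \<union> {{VA,VA'}} \<union> {{VB,VB'}}"
  unfolding G_edges_def by auto

lemma ge_empty2: "G_edges F {} \<chi> k = (\<lambda>e. Old ` e) ` F \<union> {{VA,VB}} \<union> {{VA,VA'},{VB,VB'}}"
  unfolding G_edges_def by auto

lemma gv_empty2: "G_vertices V {} \<chi> k = Old ` V \<union> {VA,VB} \<union> {VA',VB'}"
  unfolding G_vertices_def by auto




lemma card4: "card {a,b,c,d::'a} \<le> 4"
proof -
  have "card (set [a,b,c,d]) \<le> length [a,b,c,d]" by (rule card_length)
  then show ?thesis by simp
qed

lemma card4_int: "card ({a,b,c,d::'a} \<inter> X) \<le> 4"
  using card_mono[of "{a,b,c,d}" "{a,b,c,d} \<inter> X"] card4[of a b c d] by auto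

lemma card2_int: "card ({a,b::'a} \<inter> X) \<le> 2"
proof -
  have "card ({a,b} \<inter> X) \<le> card {a,b}" by (rule card_mono) auto
  also have "\<dots> \<le> 2" by (simp add: card_insert_if)
  finally show ?thesis .
qed

lemma card_map2: "finite A \<Longrightarrow> card (Old ` A \<union> {VA,VB}) \<le> card A + 2"
proof -
  assume "finite A"
  have "card (Old ` A \<union> {VA,VB}) \<le> card (Old ` A) + card {VA,VB}" by (rule card_Un_le)
  also have "\<dots> \<le> card A + 2" using card_image_le[OF \<open>finite A\<close>, of Old] by simp
  finally show ?thesis .
qed

lemma tw_part:
  assumes sg: "simple_graph V F" and Fne: "F \<noteq> {}" and V0: "V0 \<subseteq> V"
  shows "treewidth (G_vertices V V0 \<chi> k) (G_edges F V0 \<chi> k) \<le> treewidth V F + 2"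
proof -
  have fV: "finite V" using sg by (simp add: simple_graph_def)
  have Esub: "\<forall>e\<in>F. e \<subseteq> V" using sg by (auto simp: simple_graph_def)
  have ex: "\<exists>I T bag. tree_decomposition V F I T bag \<and> decomp_width I bag = decomp_width {0} (\<lambda>_. V)"
  proof (intro exI conjI)
    show "tree_decomposition V F {0} {} (\<lambda>_. V)"
      using Esub fV unfolding tree_decomposition_def is_tree_def simple_graph_def connected_on_def by auto
  qed simp
  define w where "w = treewidth V F"
  have "\<exists>I T bag. tree_decomposition V F I T bag \<and> decomp_width I bag = w"
    unfolding w_def treewidth_def by (rule LeastI_ex) (use ex in blast)
  then obtain I T bag where td: "tree_decomposition V F I T bag" and wd: "decomp_width I bag = w" by blast
  have fI: "finite I" and Ine: "I \<noteq> {}" using td by (auto simp: tree_decomposition_def is_tree_def)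
  have bV: "\<forall>i\<in>I. bag i \<subseteq> V" using td by (auto simp: tree_decomposition_def)
  have cb: "\<forall>i\<in>I. card (bag i) \<le> w + 1"
  proof
    fix i assume "i \<in> I"
    then have "card (bag i) \<le> Max ((\<lambda>i. card (bag i)) ` I)" using fI by simp
    then show "card (bag i) \<le> w+1" using wd unfolding decomp_width_def by linarith
  qed
  have w1: "w \<ge> 1"
  proof -
    obtain e where eF: "e \<in> F" using Fne by blast
    then obtain x y where exy: "e = {x,y}" "x \<noteq> y" using sg by (auto simp: simple_graph_def)
    obtain i where i: "i \<in> I" "e \<subseteq> bag i" using td eF by (auto simp: tree_decomposition_def)
    have "finite (bag i)" using bV i fV finite_subset by blast
    then have "card e \<le> card (bag i)" using i card_mono by blast
    moreover have "card e = 2" using exy by simp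
    moreover have "card (bag i) \<le> Max ((\<lambda>i. card (bag i)) ` I)" using fI i by simp
    ultimately show ?thesis using wd unfolding decomp_width_def by linarith
  qed
  define C where "C = w + 3"
  have C4: "4 \<le> C" using w1 C_def by simp
  have td0: "tree_decomposition (Old ` V \<union> {VA,VB}) ((\<lambda>e. Old ` e) ` F \<union> {{VA,VB}}) I T (\<lambda>i. Old ` bag i \<union> {VA,VB})"
    by (rule td_map[OF td])
  have cb0: "\<forall>i\<in>I. card (Old ` bag i \<union> {VA,VB}) \<le> C"
  proof
    fix i assume i: "i \<in> I"
    have "finite (bag i)" using bV i fV finite_subset by blast
    then show "card (Old ` bag i \<union> {VA,VB}) \<le> C" using card_map2 cb i C_def by fastforce
  qed
  have inv0: "\<forall>v\<in>V. \<exists>i\<in>I. {Old v,VA,VB} \<subseteq> Old ` bag i \<union> {VA,VB}"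
  proof
    fix v assume "v \<in> V"
    then obtain i where "i \<in> I" "v \<in> bag i" using td by (auto simp: tree_decomposition_def)
    then show "\<exists>i\<in>I. {Old v,VA,VB} \<subseteq> Old ` bag i \<union> {VA,VB}" by blast
  qed
  obtain p0 where p0: "p0 \<in> I" using Ine by blast
  have P: "\<exists>I' T' bag'. tree_decomposition (G_vertices V S \<chi> k) (G_edges F S \<chi> k) I' T' bag' \<and> finite I'
     \<and> (\<forall>i\<in>I'. card (bag' i) \<le> C) \<and> (\<forall>v\<in>V. \<exists>i\<in>I'. {Old v,VA,VB} \<subseteq> bag' i)" if "S \<subseteq> V0" for S
  proof -
    have "finite S" by (rule finite_subset[OF _ fV]) (use that V0 in blast)
    then show ?thesis using that
    proof (induction S rule: finite_induct)
      case empty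
      have s: "{VA,VB,VA',VB'} \<inter> (Old ` V \<union> {VA,VB}) \<subseteq> Old ` bag p0 \<union> {VA,VB}" by auto
      have c: "card {VA,VB,VA',VB'} \<le> C" using card4[of VA VB VA' VB'] C4 by linarith
      have ee: "\<forall>e\<in>{{VA,VA'},{VB,VB'}}. e \<subseteq> {VA,VB,VA',VB'}" by blast
      obtain I1 T1 bag1 where h: "tree_decomposition (Old ` V \<union> {VA,VB} \<union> {VA,VB,VA',VB'}) ((\<lambda>e. Old ` e) ` F \<union> {{VA,VB}} \<union> {{VA,VA'},{VB,VB'}}) I1 T1 bag1"
         "finite I1" "\<forall>i\<in>I1. card (bag1 i) \<le> C" "\<forall>v\<in>V. \<exists>i\<in>I1. {Old v,VA,VB} \<subseteq> bag1 i"
        using td_leaf_inv[OF td0 fI p0 s ee c cb0 inv0] by (elim exE conjE) (rule that; assumption)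
      show ?case unfolding gv_empty ge_empty2
        using h by (intro exI[of _ I1] exI[of _ T1] exI[of _ bag1] conjI) assumption+
    next
      case (insert j S)
      have "S \<subseteq> V0" using insert.prems by simp
      then obtain I' T' bag' where td': "tree_decomposition (G_vertices V S \<chi> k) (G_edges F S \<chi> k) I' T' bag'"
        and fI': "finite I'" and cb': "\<forall>i\<in>I'. card (bag' i) \<le> C" and inv': "\<forall>v\<in>V. \<exists>i\<in>I'. {Old v,VA,VB} \<subseteq> bag' i"
        using insert.IH[OF \<open>S \<subseteq> V0\<close>] by (elim exE conjE) (rule that; assumption)
      have jV: "j \<in> V" using insert.prems V0 by blast
      obtain p where p: "p \<in> I'" "{Old j,VA,VB} \<subseteq> bag' p" using inv' jV by blast
      define Vo where "Vo = G_vertices V S \<chi> k"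
      define Vn where "Vn = G_vertices V (insert j S) \<chi> k"
      define Eo where "Eo = G_edges F S \<chi> k"
      define En where "En = G_edges F (insert j S) \<chi> k"
      define B1 where "B1 = {VA,VB,Old j,J2 j} \<inter> Vn"
      define B2 where "B2 = {VB,Old j,J1 j,J2 j} \<inter> Vn"
      define E1 where "E1 = {e\<in>En. e \<notin> Eo \<and> e \<subseteq> B1}"
      define E2 where "E2 = {e\<in>En. e \<notin> Eo \<and> e \<subseteq> B2}"
      have new: "J1 j \<notin> Vo" "J2 j \<notin> Vo" using gv_new[OF insert.hyps(2)] unfolding Vo_def by auto
      have bas: "VA \<in> Vn" "VB \<in> Vn" "Old j \<in> Vn" using gv_basic jV unfolding Vn_def by auto
      have s1: "B1 \<inter> Vo \<subseteq> bag' p" using p new by (auto simp: B1_def)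
      have c1: "card B1 \<le> C" using card4_int C4 unfolding B1_def by (meson order_trans)
      have c2: "card B2 \<le> C" using card4_int C4 unfolding B2_def by (meson order_trans)
      have e1: "\<forall>e\<in>E1. e \<subseteq> B1" unfolding E1_def by blast
      have e2: "\<forall>e\<in>E2. e \<subseteq> B2" unfolding E2_def by blast
      have td'': "tree_decomposition Vo Eo I' T' bag'" using td' unfolding Vo_def Eo_def .
      obtain I1 T1 bag1 x1 where td1: "tree_decomposition (Vo \<union> B1) (Eo \<union> E1) I1 T1 bag1"
        and fI1: "finite I1" and cb1: "\<forall>i\<in>I1. card (bag1 i) \<le> C" and inv1: "\<forall>v\<in>V. \<exists>i\<in>I1. {Old v,VA,VB} \<subseteq> bag1 i"
        and x1: "x1 \<in> I1" "bag1 x1 = B1"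
        using td_leaf_inv[OF td'' fI' p(1) s1 e1 c1 cb' inv'] by (elim exE conjE bexE) (rule that; assumption)
      have s2: "B2 \<inter> (Vo \<union> B1) \<subseteq> bag1 x1" using x1(2) new bas by (auto simp: B1_def B2_def)
      obtain I2 T2 bag2 where td2: "tree_decomposition (Vo \<union> B1 \<union> B2) (Eo \<union> E1 \<union> E2) I2 T2 bag2"
        and fI2: "finite I2" and cb2: "\<forall>i\<in>I2. card (bag2 i) \<le> C" and inv2: "\<forall>v\<in>V. \<exists>i\<in>I2. {Old v,VA,VB} \<subseteq> bag2 i"
        using td_leaf_inv[OF td1 fI1 x1(1) s2 e2 c2 cb1 inv1] by (elim exE conjE bexE) (rule that; assumption)
      have eqV: "Vo \<union> B1 \<union> B2 = Vn"
      proof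
        show "Vo \<union> B1 \<union> B2 \<subseteq> Vn" using gv_mono[of V S \<chi> k j] unfolding Vo_def Vn_def B1_def B2_def by blast
        show "Vn \<subseteq> Vo \<union> B1 \<union> B2" using gv_ins[of V j S \<chi> k] unfolding Vo_def[symmetric] Vn_def[symmetric] B1_def B2_def by blast
      qed
      have eqE: "Eo \<union> E1 \<union> E2 = En"
      proof
        show "Eo \<union> E1 \<union> E2 \<subseteq> En" using ge_mono[of F S \<chi> k j] unfolding Eo_def En_def E1_def E2_def by blast
        show "En \<subseteq> Eo \<union> E1 \<union> E2"
        proof
          fix e assume eEn: "e \<in> En"
          show "e \<in> Eo \<union> E1 \<union> E2"
          proof (cases "e \<in> Eo")
            case False
            have "e \<subseteq> Vn \<and> (e \<subseteq> {VA,VB,Old j,J2 j} \<or> e \<subseteq> {VB,Old j,J1 j,J2 j})"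
              using ge_key[OF jV eEn[unfolded En_def] False[unfolded Eo_def]] unfolding Vn_def .
            then show ?thesis using eEn False unfolding E1_def E2_def B1_def B2_def by blast
          qed simp
        qed
      qed
      show ?case unfolding Vn_def[symmetric] En_def[symmetric] eqV[symmetric] eqE[symmetric]
        using td2 fI2 cb2 inv2 by (intro exI[of _ I2] exI[of _ T2] exI[of _ bag2] conjI) assumption+
    qed
  qed
  obtain I' T' bag' where td': "tree_decomposition (G_vertices V V0 \<chi> k) (G_edges F V0 \<chi> k) I' T' bag'"
    and fI': "finite I'" and cb': "\<forall>i\<in>I'. card (bag' i) \<le> C" using P[OF order_refl] by blast
  have "I' \<noteq> {}" using td' by (simp add: tree_decomposition_def is_tree_def)
  then have "Max ((\<lambda>i. card (bag' i)) ` I') \<le> C" using fI' cb' by simp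
  then have "decomp_width I' bag' \<le> w + 2" unfolding decomp_width_def C_def by linarith
  moreover have "treewidth (G_vertices V V0 \<chi> k) (G_edges F V0 \<chi> k) \<le> decomp_width I' bag'"
    unfolding treewidth_def by (rule Least_le) (use td' in blast)
  ultimately show ?thesis unfolding w_def by linarith
qed




lemma pd_map:
  assumes pd: "path_decomposition V E m bag"
  shows "path_decomposition (Old ` V \<union> {VA,VB}) ((\<lambda>e. Old ` e) ` E \<union> {{VA,VB}}) m (\<lambda>i. Old ` bag i \<union> {VA,VB})"
proof -
  have m: "m \<ge> 1" and bs: "\<forall>i<m. bag i \<subseteq> V" and cv: "\<forall>v\<in>V. \<exists>i<m. v \<in> bag i"
    and ce: "\<forall>e\<in>E. \<exists>i<m. e \<subseteq> bag i"
    and ip: "\<forall>v i j l. i \<le> j \<longrightarrow> j \<le> l \<longrightarrow> l < m \<longrightarrow> v \<in> bag i \<longrightarrow> v \<in> bag l \<longrightarrow> v \<in> bag j"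
    using pd by (auto simp: path_decomposition_def)
  have m0: "0 < m" using m by simp
  have bs': "\<forall>i<m. Old ` bag i \<union> {VA,VB} \<subseteq> Old ` V \<union> {VA,VB}" using bs by blast
  have cv': "\<forall>v\<in>Old ` V \<union> {VA,VB}. \<exists>i<m. v \<in> Old ` bag i \<union> {VA,VB}"
    using cv m0 by blast
  have ce': "\<forall>e\<in>(\<lambda>e. Old ` e) ` E \<union> {{VA,VB}}. \<exists>i<m. e \<subseteq> Old ` bag i \<union> {VA,VB}"
  proof
    fix e assume "e \<in> (\<lambda>e. Old ` e) ` E \<union> {{VA,VB}}"
    then show "\<exists>i<m. e \<subseteq> Old ` bag i \<union> {VA,VB}"
    proof
      assume "e \<in> (\<lambda>e. Old ` e) ` E"
      then obtain e0 where "e0 \<in> E" "e = Old ` e0" by blast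
      then obtain i where "i < m" "e0 \<subseteq> bag i" using ce by blast
      then show ?thesis using \<open>e = Old ` e0\<close> by blast
    next
      assume "e \<in> {{VA,VB}}" then show ?thesis using m0 by blast
    qed
  qed
  have ip': "\<forall>v i j l. i \<le> j \<longrightarrow> j \<le> l \<longrightarrow> l < m \<longrightarrow> v \<in> Old ` bag i \<union> {VA,VB} \<longrightarrow> v \<in> Old ` bag l \<union> {VA,VB} \<longrightarrow> v \<in> Old ` bag j \<union> {VA,VB}"
  proof (intro allI impI)
    fix v i j l assume ij: "i \<le> j" "j \<le> l" "l < m" and vi: "v \<in> Old ` bag i \<union> {VA,VB}" and vl: "v \<in> Old ` bag l \<union> {VA,VB}"
    show "v \<in> Old ` bag j \<union> {VA,VB}"
    proof (cases "v \<in> {VA,VB}")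
      case True then show ?thesis by blast
    next
      case False
      then obtain u where u: "v = Old u" "u \<in> bag i" using vi by blast
      have "u \<in> bag l" using vl False u(1) by auto
      then have "u \<in> bag j" using ip ij u(2) by blast
      then show ?thesis using u(1) by blast
    qed
  qed
  show ?thesis unfolding path_decomposition_def using m bs' cv' ce' ip' by blast
qed

lemma pw_part:
  assumes sg: "simple_graph V F" and Fne: "F \<noteq> {}" and V0: "V0 \<subseteq> V"
  shows "pathwidth (G_vertices V V0 \<chi> k) (G_edges F V0 \<chi> k) \<le> pathwidth V F + 4"
proof -
  have fV: "finite V" using sg by (simp add: simple_graph_def)
  have Esub: "\<forall>e\<in>F. e \<subseteq> V" using sg by (auto simp: simple_graph_def)
  have ex: "\<exists>m bag. path_decomposition V F m bag \<and> decomp_width {0..<m} bag = decomp_width {0..<1} (\<lambda>_. V)"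
  proof (intro exI conjI)
    show "path_decomposition V F 1 (\<lambda>_. V)"
      using Esub unfolding path_decomposition_def by auto
  qed simp
  define w where "w = pathwidth V F"
  have "\<exists>m bag. path_decomposition V F m bag \<and> decomp_width {0..<m} bag = w"
    unfolding w_def pathwidth_def by (rule LeastI_ex) (use ex in blast)
  then obtain m bag where pd: "path_decomposition V F m bag" and wd: "decomp_width {0..<m} bag = w" by blast
  have m1: "m \<ge> 1" using pd by (simp add: path_decomposition_def)
  have bV: "\<forall>i<m. bag i \<subseteq> V" using pd by (simp add: path_decomposition_def)
  have cb: "\<forall>i<m. card (bag i) \<le> w + 1"
  proof (intro allI impI)
    fix i assume "i < m"
    then have "card (bag i) \<le> Max ((\<lambda>i. card (bag i)) ` {0..<m})" by simp
    then show "card (bag i) \<le> w+1" using wd unfolding decomp_width_def by linarith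
  qed
  have w1: "w \<ge> 1"
  proof -
    obtain e where eF: "e \<in> F" using Fne by blast
    then obtain x y where exy: "e = {x,y}" "x \<noteq> y" using sg by (auto simp: simple_graph_def)
    obtain i where i: "i < m" "e \<subseteq> bag i" using pd eF by (auto simp: path_decomposition_def)
    have "finite (bag i)" by (rule finite_subset[OF _ fV]) (use bV i in blast)
    then have "card e \<le> card (bag i)" using i card_mono by blast
    moreover have "card e = 2" using exy by simp
    moreover have "card (bag i) \<le> Max ((\<lambda>i. card (bag i)) ` {0..<m})" using i by simp
    ultimately show ?thesis using wd unfolding decomp_width_def by linarith
  qed
  define C where "C = w + 3"
  have pd0: "path_decomposition (Old ` V \<union> {VA,VB}) ((\<lambda>e. Old ` e) ` F \<union> {{VA,VB}}) m (\<lambda>i. Old ` bag i \<union> {VA,VB})"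
    by (rule pd_map[OF pd])
  have cb0: "\<forall>i<m. card (Old ` bag i \<union> {VA,VB}) \<le> C"
  proof (intro allI impI)
    fix i assume i: "i < m"
    have "finite (bag i)" by (rule finite_subset[OF _ fV]) (use bV i in blast)
    then show "card (Old ` bag i \<union> {VA,VB}) \<le> C" using card_map2 cb i C_def by fastforce
  qed
  have inv0: "\<forall>v\<in>V. \<exists>i<m. {Old v,VA,VB} \<subseteq> Old ` bag i \<union> {VA,VB} \<and> card (Old ` bag i \<union> {VA,VB}) \<le> C"
  proof
    fix v assume "v \<in> V"
    then obtain i where "i < m" "v \<in> bag i" using pd by (auto simp: path_decomposition_def)
    then show "\<exists>i<m. {Old v,VA,VB} \<subseteq> Old ` bag i \<union> {VA,VB} \<and> card (Old ` bag i \<union> {VA,VB}) \<le> C"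
      using cb0 by blast
  qed
  have P: "\<exists>m' bag'. path_decomposition (G_vertices V S \<chi> k) (G_edges F S \<chi> k) m' bag'
     \<and> (\<forall>i<m'. card (bag' i) \<le> C + 2) \<and> (\<forall>v\<in>V. \<exists>i<m'. {Old v,VA,VB} \<subseteq> bag' i \<and> card (bag' i) \<le> C)" if "S \<subseteq> V0" for S
  proof -
    have "finite S" by (rule finite_subset[OF _ fV]) (use that V0 in blast)
    then show ?thesis using that
    proof (induction S rule: finite_induct)
      case empty
      have q: "0 < m" using m1 by simp
      have N: "{VA',VB'} \<inter> (Old ` V \<union> {VA,VB}) = {}" by auto
      have ee: "\<forall>e\<in>{{VA,VA'},{VB,VB'}}. e \<subseteq> (Old ` bag 0 \<union> {VA,VB}) \<union> {VA',VB'}" by blast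
      have cbb: "\<forall>i<m. card (Old ` bag i \<union> {VA,VB}) \<le> C + 2" using cb0 by fastforce
      have cq: "card (Old ` bag 0 \<union> {VA,VB}) \<le> C" using cb0 q by blast
      have cN: "card {VA',VB'} \<le> 2" by (simp add: card_insert_if)
      obtain bag1 where h: "path_decomposition (Old ` V \<union> {VA,VB} \<union> {VA',VB'}) ((\<lambda>e. Old ` e) ` F \<union> {{VA,VB}} \<union> {{VA,VA'},{VB,VB'}}) (Suc m) bag1"
         "\<forall>i<Suc m. card (bag1 i) \<le> C + 2" "\<forall>v\<in>V. \<exists>i<Suc m. {Old v,VA,VB} \<subseteq> bag1 i \<and> card (bag1 i) \<le> C"
        using pd_dup_inv[OF pd0 q N ee cbb cq cN inv0] by (elim exE conjE) (rule that; assumption)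
      show ?case unfolding gv_empty2 ge_empty2
        using h by (intro exI[of _ "Suc m"] exI[of _ bag1] conjI) assumption+
    next
      case (insert j S)
      have "S \<subseteq> V0" using insert.prems by simp
      then obtain m' bag' where pd': "path_decomposition (G_vertices V S \<chi> k) (G_edges F S \<chi> k) m' bag'"
        and cb': "\<forall>i<m'. card (bag' i) \<le> C + 2" and inv': "\<forall>v\<in>V. \<exists>i<m'. {Old v,VA,VB} \<subseteq> bag' i \<and> card (bag' i) \<le> C"
        using insert.IH[OF \<open>S \<subseteq> V0\<close>] by (elim exE conjE) (rule that; assumption)
      have jV: "j \<in> V" using insert.prems V0 by blast
      obtain q where q: "q < m'" "{Old j,VA,VB} \<subseteq> bag' q" "card (bag' q) \<le> C" using inv' jV by blast
      define Vo where "Vo = G_vertices V S \<chi> k"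
      define Vn where "Vn = G_vertices V (insert j S) \<chi> k"
      define Eo where "Eo = G_edges F S \<chi> k"
      define En where "En = G_edges F (insert j S) \<chi> k"
      define N where "N = {J1 j, J2 j} \<inter> Vn"
      define E1 where "E1 = {e\<in>En. e \<notin> Eo \<and> e \<subseteq> bag' q \<union> N}"
      have new: "J1 j \<notin> Vo" "J2 j \<notin> Vo" using gv_new[OF insert.hyps(2)] unfolding Vo_def by auto
      have Nd: "N \<inter> Vo = {}" using new unfolding N_def by blast
      have cN: "card N \<le> 2" unfolding N_def by (rule card2_int)
      have e1: "\<forall>e\<in>E1. e \<subseteq> bag' q \<union> N" unfolding E1_def by blast
      have pd'': "path_decomposition Vo Eo m' bag'" using pd' unfolding Vo_def Eo_def .
      obtain bag2 where pd2: "path_decomposition (Vo \<union> N) (Eo \<union> E1) (Suc m') bag2"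
        and cb2: "\<forall>i<Suc m'. card (bag2 i) \<le> C + 2" and inv2: "\<forall>v\<in>V. \<exists>i<Suc m'. {Old v,VA,VB} \<subseteq> bag2 i \<and> card (bag2 i) \<le> C"
        using pd_dup_inv[OF pd'' q(1) Nd e1 cb' q(3) cN inv'] by (elim exE conjE) (rule that; assumption)
      have eqV: "Vo \<union> N = Vn"
      proof
        show "Vo \<union> N \<subseteq> Vn" using gv_mono[of V S \<chi> k j] unfolding Vo_def Vn_def N_def by blast
        show "Vn \<subseteq> Vo \<union> N" using gv_ins[of V j S \<chi> k] unfolding Vo_def[symmetric] Vn_def[symmetric] N_def by blast
      qed
      have eqE: "Eo \<union> E1 = En"
      proof
        show "Eo \<union> E1 \<subseteq> En" using ge_mono[of F S \<chi> k j] unfolding Eo_def En_def E1_def by blast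
        show "En \<subseteq> Eo \<union> E1"
        proof
          fix e assume eEn: "e \<in> En"
          show "e \<in> Eo \<union> E1"
          proof (cases "e \<in> Eo")
            case False
            have "e \<subseteq> Vn \<and> (e \<subseteq> {VA,VB,Old j,J2 j} \<or> e \<subseteq> {VB,Old j,J1 j,J2 j})"
              using ge_key[OF jV eEn[unfolded En_def] False[unfolded Eo_def]] unfolding Vn_def .
            then have "e \<subseteq> bag' q \<union> N" using q(2) unfolding N_def by blast
            then show ?thesis using eEn False unfolding E1_def by blast
          qed simp
        qed
      qed
      show ?case unfolding Vn_def[symmetric] En_def[symmetric] eqV[symmetric] eqE[symmetric]
        using pd2 cb2 inv2 by (intro exI[of _ "Suc m'"] exI[of _ bag2] conjI) assumption+
    qed
  qed
  obtain m' bag' where pd': "path_decomposition (G_vertices V V0 \<chi> k) (G_edges F V0 \<chi> k) m' bag'"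
    and cb': "\<forall>i<m'. card (bag' i) \<le> C + 2" using P[OF order_refl] by blast
  have "m' \<ge> 1" using pd' by (simp add: path_decomposition_def)
  then have "{0..<m'} \<noteq> {}" by simp
  then have "Max ((\<lambda>i. card (bag' i)) ` {0..<m'}) \<le> C + 2" using cb' by simp
  then have "decomp_width {0..<m'} bag' \<le> w + 4" unfolding decomp_width_def C_def by linarith
  moreover have "pathwidth (G_vertices V V0 \<chi> k) (G_edges F V0 \<chi> k) \<le> decomp_width {0..<m'} bag'"
    unfolding pathwidth_def by (rule Least_le) (use pd' in blast)
  ultimately show ?thesis unfolding w_def by linarith
qed


theorem lemma8:
  fixes n k :: nat and F :: "nat set set" and V0 :: "nat set" and \<chi> :: "nat \<Rightarrow> nat"
  assumes "simple_graph {1..n} F"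
    and "F \<noteq> {}"
    and "V0 \<subseteq> {1..n}"
    and "\<forall>j\<in>V0. \<chi> j \<in> {1..k}"
    and "\<forall>i\<in>V0. \<forall>j\<in>V0. {i, j} \<in> F \<longrightarrow> \<chi> i \<noteq> \<chi> j"
  shows "treewidth (G_vertices {1..n} V0 \<chi> k) (G_edges F V0 \<chi> k) \<le> treewidth {1..n} F + 2
       \<and> pathwidth (G_vertices {1..n} V0 \<chi> k) (G_edges F V0 \<chi> k) \<le> pathwidth {1..n} F + 4"
  using tw_part[OF assms(1,2,3)] pw_part[OF assms(1,2,3)] by blast

end
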